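(* Let $\|\cdot\|$ be a norm on $\mathbb{R}^{m\times d}$ with dual norm $\|U\|_\star=\sup_{\|D\|\le1}\langle U,D\rangle_F$, and let $C>0$ be a constant such that $\|\Delta\|_{1\to2}^2\le C\|\Delta\|^2$ for all $\Delta\in\mathbb{R}^{m\times d}$ (one may take $C=1$ when $\|\cdot\|=\|\cdot\|_{1\to2}$). Let $X\in\mathbb{R}^{m\times n}$ and $D\in\mathbb{R}^{m\times d}$. For every $\epsilon>0$ the set $\mathfrak{A}_\epsilon(X,D)$ is non-empty, and for every $D'\in\mathbb{R}^{m\times d}$, $$F_X(D')\le F_X(D)+L_X(D)\,\|D'-D\|+C_X(D)\,\|D'-D\|^2,$$ where $$L_X(D)=\inf_{\epsilon>0}\sup_{A\in\mathfrak{A}_\epsilon(X,D)}\tfrac1n\|(X-DA)A^\top\|_\star,\qquad C_X(D)=\inf_{\epsilon>0}\sup_{A\in\mathfrak{A}_\epsilon(X,D)}\tfrac{C}{2n}\sum_{i=1}^n\|\alpha_i\|_1^2$$ (these quantities lie in $[0,+\infty]$; the inequality is trivial if one of them is infinite and $D'\neq D$).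
   Context: A penalty is a function $g:\mathbb{R}^d\to\mathbb{R}\cup\{+\infty\}$ with $g\ge0$, not identically $+\infty$. For $x\in\mathbb{R}^m$, $D\in\mathbb{R}^{m\times d}$, $\alpha\in\mathbb{R}^d$: $\mathcal{L}_x(D,\alpha)=\tfrac12\|x-D\alpha\|_2^2+g(\alpha)$, $f_x(D)=\inf_\alpha\mathcal{L}_x(D,\alpha)$. For $X=[x_1,\dots,x_n]$, $F_X(D)=\frac1n\sum_i f_{x_i}(D)$. $\|\Delta\|_{1\to2}=\max_j\|\delta_j\|_2$ for $\Delta=[\delta_1,\dots,\delta_d]$. For $\epsilon>0$, $\mathfrak{A}_\epsilon(X,D)=\{A=[\alpha_1,\dots,\alpha_n]\in\mathbb{R}^{d\times n}:\ \mathcal{L}_{x_i}(D,\alpha_i)\le f_{x_i}(D)+\epsilon\ \text{for all } i\}$. $\langle\cdot,\cdot\rangle_F$ is the Frobenius inner product. *)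

theory Defs
  imports "HOL-Analysis.Analysis"
begin

text \<open>Matrices in R^{m x d} are represented as real^'d^'m (rows indexed by 'm).
  The j-th column of a matrix M is  column j M.\<close>

definition is_matrix_norm :: "(real^'d^'m \<Rightarrow> real) \<Rightarrow> bool" where
  "is_matrix_norm N \<longleftrightarrow>
     (\<forall>M. N M = 0 \<longleftrightarrow> M = 0) \<and>
     (\<forall>c M. N (c *\<^sub>R M) = \<bar>c\<bar> * N M) \<and>
     (\<forall>M M'. N (M + M') \<le> N M + N M')"

definition frob_inner :: "real^'d^'m \<Rightarrow> real^'d^'m \<Rightarrow> real" where
  "frob_inner U D = (\<Sum>i\<in>UNIV. \<Sum>j\<in>UNIV. U $ i $ j * D $ i $ j)"

definition dual_norm :: "(real^'d^'m \<Rightarrow> real) \<Rightarrow> real^'d^'m \<Rightarrow> ereal" where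
  "dual_norm N U = (SUP D\<in>{D. N D \<le> 1}. ereal (frob_inner U D))"

definition norm_1to2 :: "real^'d^'m \<Rightarrow> real" where
  "norm_1to2 M = Max (range (\<lambda>j. norm (column j M)))"

definition l1norm :: "real^'d \<Rightarrow> real" where
  "l1norm a = (\<Sum>j\<in>UNIV. \<bar>a $ j\<bar>)"

definition is_penalty :: "(real^'d \<Rightarrow> ereal) \<Rightarrow> bool" where
  "is_penalty g \<longleftrightarrow> (\<forall>a. 0 \<le> g a \<and> g a \<noteq> -\<infinity>) \<and> (\<exists>a. g a \<noteq> \<infinity>)"

definition lossL :: "(real^'d \<Rightarrow> ereal) \<Rightarrow> real^'m \<Rightarrow> real^'d^'m \<Rightarrow> real^'d \<Rightarrow> ereal" where
  "lossL g x D a = ereal (1/2 * (norm (x - D *v a))\<^sup>2) + g a"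

definition f_loss :: "(real^'d \<Rightarrow> ereal) \<Rightarrow> real^'m \<Rightarrow> real^'d^'m \<Rightarrow> ereal" where
  "f_loss g x D = (INF a. lossL g x D a)"

definition F_loss :: "(real^'d \<Rightarrow> ereal) \<Rightarrow> real^'n^'m \<Rightarrow> real^'d^'m \<Rightarrow> ereal" where
  "F_loss g X D = ereal (1 / real CARD('n)) * (\<Sum>i\<in>UNIV. f_loss g (column i X) D)"

definition approx_set :: "(real^'d \<Rightarrow> ereal) \<Rightarrow> real \<Rightarrow> real^'n^'m \<Rightarrow> real^'d^'m \<Rightarrow> (real^'n^'d) set" where
  "approx_set g \<epsilon> X D = {A. \<forall>i. lossL g (column i X) D (column i A) \<le> f_loss g (column i X) D + ereal \<epsilon>}"

definition L_const :: "(real^'d^'m \<Rightarrow> real) \<Rightarrow> (real^'d \<Rightarrow> ereal) \<Rightarrow> real^'n^'m \<Rightarrow> real^'d^'m \<Rightarrow> ereal" where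
  "L_const N g X D = (INF \<epsilon>\<in>{0<..}. SUP A\<in>approx_set g \<epsilon> X D.
      ereal (1 / real CARD('n)) * dual_norm N ((X - D ** A) ** transpose A))"

definition C_const :: "real \<Rightarrow> (real^'d \<Rightarrow> ereal) \<Rightarrow> real^'n^'m \<Rightarrow> real^'d^'m \<Rightarrow> ereal" where
  "C_const C g X D = (INF \<epsilon>\<in>{0<..}. SUP A\<in>(approx_set g \<epsilon> X D :: (real^'n^'d) set).
      ereal (C / (2 * real CARD('n)) * (\<Sum>i\<in>UNIV. (l1norm (column i A))\<^sup>2)))"

end

theory Submission
  imports Defs
begin

lemma f_loss_fin:
  assumes "is_penalty g"
  shows "f_loss g x D \<noteq> \<infinity>" "f_loss g x D \<ge> 0"
proof -
  obtain a where a: "g a \<noteq> \<infinity>" using assms unfolding is_penalty_def by auto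
  have "f_loss g x D \<le> lossL g x D a" unfolding f_loss_def by (rule INF_lower) simp
  moreover have "lossL g x D a \<noteq> \<infinity>" using a unfolding lossL_def by simp
  ultimately show "f_loss g x D \<noteq> \<infinity>" by auto
  have "\<And>a. lossL g x D a \<ge> 0" unfolding lossL_def using assms unfolding is_penalty_def
    by (simp add: add_nonneg_nonneg)
  then show "f_loss g x D \<ge> 0" unfolding f_loss_def by (rule INF_greatest)
qed

lemma col_key:
  assumes pen: "is_penalty g"
    and h: "lossL g x D a \<le> f_loss g x D + ereal e"
  shows "real_of_ereal (f_loss g x D') \<le> real_of_ereal (f_loss g x D) + e
     - (x - D *v a) \<bullet> ((D' - D) *v a) + 1/2 * (norm ((D' - D) *v a))\<^sup>2"
proof -
  have fD: "f_loss g x D = ereal (real_of_ereal (f_loss g x D))"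
    using f_loss_fin[OF pen, of x D] by (cases "f_loss g x D") auto
  have fD': "f_loss g x D' = ereal (real_of_ereal (f_loss g x D'))"
    using f_loss_fin[OF pen, of x D'] by (cases "f_loss g x D'") auto
  have gn: "g a \<noteq> -\<infinity>" "g a \<ge> 0" using pen unfolding is_penalty_def by auto
  have "g a \<noteq> \<infinity>"
  proof
    assume "g a = \<infinity>"
    then have "lossL g x D a = \<infinity>" unfolding lossL_def by simp
    with h fD show False by (metis PInfty_neq_ereal(1) ereal_infty_less_eq(1) plus_ereal.simps(1))
  qed
  then obtain G where G: "g a = ereal G" using gn by (cases "g a") auto
  have h1: "1/2 * (norm (x - D *v a))\<^sup>2 + G \<le> real_of_ereal (f_loss g x D) + e"
    using h fD unfolding lossL_def G by (metis ereal_less_eq(3) plus_ereal.simps(1))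
  have "f_loss g x D' \<le> lossL g x D' a" unfolding f_loss_def by (rule INF_lower) simp
  then have h2: "real_of_ereal (f_loss g x D') \<le> 1/2 * (norm (x - D' *v a))\<^sup>2 + G"
    using fD' unfolding lossL_def G by (metis ereal_less_eq(3) plus_ereal.simps(1))
  have eq: "x - D' *v a = (x - D *v a) - (D' - D) *v a"
    by (simp add: matrix_vector_mult_diff_rdistrib)
  have "(norm (x - D' *v a))\<^sup>2 = (norm (x - D *v a))\<^sup>2 - 2 * ((x - D *v a) \<bullet> ((D' - D) *v a)) + (norm ((D' - D) *v a))\<^sup>2"
    unfolding eq by (simp add: power2_norm_eq_inner inner_diff_left inner_diff_right inner_commute)
  with h1 h2 show ?thesis by linarith
qed


lemma column_res: "column i (X - D ** A) = column i X - D *v column i A"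
  by (simp add: column_def vec_eq_iff matrix_matrix_mult_def matrix_vector_mult_def)

lemma frob_sum:
  fixes R :: "real^'n^'m" and A :: "real^'n^'d" and Dl :: "real^'d^'m"
  shows "(\<Sum>i\<in>UNIV. column i R \<bullet> (Dl *v column i A)) = frob_inner (R ** transpose A) Dl"
proof -
  have "(\<Sum>i\<in>UNIV. column i R \<bullet> (Dl *v column i A))
      = (\<Sum>i\<in>UNIV. \<Sum>k\<in>UNIV. \<Sum>j\<in>UNIV. R$k$i * A$j$i * Dl$k$j)"
    by (simp add: inner_vec_def matrix_vector_mult_def column_def sum_distrib_left mult_ac)
  also have "\<dots> = (\<Sum>k\<in>UNIV. \<Sum>i\<in>UNIV. \<Sum>j\<in>UNIV. R$k$i * A$j$i * Dl$k$j)"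
    by (rule sum.swap)
  also have "\<dots> = (\<Sum>k\<in>UNIV. \<Sum>j\<in>UNIV. \<Sum>i\<in>UNIV. R$k$i * A$j$i * Dl$k$j)"
    by (rule sum.cong[OF refl], rule sum.swap)
  also have "\<dots> = frob_inner (R ** transpose A) Dl"
    by (simp add: frob_inner_def matrix_matrix_mult_def transpose_def sum_distrib_right)
  finally show ?thesis .
qed

lemma frob_scale: "frob_inner U (c *\<^sub>R M) = c * frob_inner U M"
  by (simp add: frob_inner_def sum_distrib_left mult_ac)

lemma norm_mv_bound:
  fixes Dl :: "real^'d^'m"
  shows "norm (Dl *v a) \<le> norm_1to2 Dl * l1norm a"
proof -
  have col: "norm (column j Dl) \<le> norm_1to2 Dl" for j
    unfolding norm_1to2_def by (rule Max_ge) auto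
  have "norm (Dl *v a) = norm (\<Sum>j\<in>UNIV. a$j *\<^sub>R column j Dl)"
    by (simp add: matrix_mult_sum scalar_mult_eq_scaleR)
  also have "\<dots> \<le> (\<Sum>j\<in>UNIV. norm (a$j *\<^sub>R column j Dl))" by (rule norm_sum)
  also have "\<dots> \<le> (\<Sum>j\<in>UNIV. \<bar>a$j\<bar> * norm_1to2 Dl)"
    by (rule sum_mono) (simp add: col mult_left_mono)
  also have "\<dots> = norm_1to2 Dl * l1norm a"
    by (simp add: l1norm_def sum_distrib_left mult_ac)
  finally show ?thesis .
qed

lemma norm_1to2_nonneg: "norm_1to2 Dl \<ge> 0"
proof -
  have "norm (column undefined Dl) \<le> norm_1to2 Dl"
    unfolding norm_1to2_def by (rule Max_ge) auto
  then show ?thesis using norm_ge_zero order_trans by blast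
qed

lemma l1_nonneg: "l1norm a \<ge> 0" unfolding l1norm_def by (simp add: sum_nonneg)

lemma dual_lb:
  assumes N: "is_matrix_norm N" and t: "N Dl > 0"
  shows "ereal (- frob_inner U Dl / N Dl) \<le> dual_norm N U"
proof -
  let ?W = "(- 1 / N Dl) *\<^sub>R Dl"
  have "N ?W = \<bar>- 1 / N Dl\<bar> * N Dl" using N unfolding is_matrix_norm_def by blast
  also have "\<dots> = 1" using t by simp
  finally have "N ?W \<le> 1" by simp
  then have "ereal (frob_inner U ?W) \<le> dual_norm N U"
    unfolding dual_norm_def by (intro SUP_upper) auto
  moreover have "frob_inner U ?W = - frob_inner U Dl / N Dl" by (simp only: frob_scale) simp
  ultimately show ?thesis by simp
qed

lemma dual_nonneg:
  assumes N: "is_matrix_norm N"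
  shows "dual_norm N U \<ge> 0"
proof -
  have "N 0 = 0" using N unfolding is_matrix_norm_def by blast
  then have "ereal (frob_inner U 0) \<le> dual_norm N U"
    unfolding dual_norm_def by (intro SUP_upper) auto
  then show ?thesis by (simp add: frob_inner_def zero_ereal_def)
qed

lemma approx_nonempty:
  fixes X :: "real^'n^'m" and D :: "real^'d^'m" and g :: "real^'d \<Rightarrow> ereal"
  assumes pen: "is_penalty g" and e: "e > 0"
  shows "(approx_set g e X D :: (real^'n^'d) set) \<noteq> {}"
proof -
  have "\<exists>a. lossL g (column i X) D a \<le> f_loss g (column i X) D + ereal e" for i
  proof -
    let ?f = "f_loss g (column i X) D"
    have "?f < ?f + ereal e" using f_loss_fin[OF pen, of "column i X" D] e
      by (cases ?f) auto
    then have "(INF a. lossL g (column i X) D a) < ?f + ereal e" unfolding f_loss_def .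
    then obtain a where "lossL g (column i X) D a < ?f + ereal e" by (auto simp: INF_less_iff)
    then show ?thesis by (intro exI[of _ a]) simp
  qed
  then obtain h where h: "\<And>i. lossL g (column i X) D (h i) \<le> f_loss g (column i X) D + ereal e"
    by metis
  let ?A = "(\<chi> k i. h i $ k) :: real^'n^'d"
  have "column i ?A = h i" for i by (simp add: column_def vec_eq_iff)
  then have "?A \<in> approx_set g e X D" unfolding approx_set_def using h by simp
  then show ?thesis by blast
qed


lemma alg: "(n::real)>0 \<Longrightarrow> 1/n*(S + n*e - f + 1/2*C*t\<^sup>2*Q) = 1/n*S + e + 1/n*(-f) + t\<^sup>2*(C/(2*n)*Q)"
  by (simp add: field_simps)
lemma sumalg: "finite I \<Longrightarrow> (\<Sum>i\<in>I. (a i::real) + e - b i + 1/2*(C*t*q i)) = (\<Sum>i\<in>I. a i) + real (card I) * e - (\<Sum>i\<in>I. b i) + 1/2*C*t*(\<Sum>i\<in>I. q i)"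
  by (simp add: sum.distrib sum_subtractf sum_distrib_left mult_ac)

definition Fr :: "(real^'d \<Rightarrow> ereal) \<Rightarrow> real^'n^'m \<Rightarrow> real^'d^'m \<Rightarrow> real" where
  "Fr g X D = 1 / real CARD('n) * (\<Sum>i\<in>UNIV. real_of_ereal (f_loss g (column i X) D))"

lemma F_Fr: assumes pen: "is_penalty g" shows "F_loss g X D = ereal (Fr g X D)"
proof -
  have "(\<Sum>i\<in>UNIV. f_loss g (column i X) D) = (\<Sum>i\<in>UNIV. ereal (real_of_ereal (f_loss g (column i X) D)))"
  proof (rule sum.cong[OF refl])
    fix i show "f_loss g (column i X) D = ereal (real_of_ereal (f_loss g (column i X) D))"
      using f_loss_fin[OF pen, of "column i X" D] by (cases "f_loss g (column i X) D") auto
  qed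
  then show ?thesis unfolding F_loss_def Fr_def by (simp add: sum_ereal)
qed

lemma approx_mono: "e \<le> e1 \<Longrightarrow> approx_set g e X D \<subseteq> approx_set g e1 X D"
  unfolding approx_set_def
  by (auto intro: order_trans[OF _ add_left_mono[of "ereal e" "ereal e1"]])

lemma main_A:
  fixes N :: "real^'d^'m \<Rightarrow> real" and X :: "real^'n^'m" and A :: "real^'n^'d"
  assumes pen: "is_penalty g"
    and Cb: "\<forall>\<Delta>::real^'d^'m. (norm_1to2 \<Delta>)\<^sup>2 \<le> C * (N \<Delta>)\<^sup>2"
    and A: "A \<in> approx_set g e X D"
  shows "Fr g X D' \<le> Fr g X D + e
     + 1 / real CARD('n) * (- frob_inner ((X - D ** A) ** transpose A) (D' - D))
     + (N (D' - D))\<^sup>2 * (C / (2 * real CARD('n)) * (\<Sum>i\<in>UNIV. (l1norm (column i A))\<^sup>2))"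
proof -
  let ?n = "real CARD('n)"
  let ?t = "N (D' - D)"
  let ?U = "(X - D ** A) ** transpose A"
  have n: "?n > 0" by simp
  have key: "real_of_ereal (f_loss g (column i X) D') \<le> real_of_ereal (f_loss g (column i X) D) + e
     - column i (X - D ** A) \<bullet> ((D' - D) *v column i A) + 1/2 * (norm ((D' - D) *v column i A))\<^sup>2" for i
    unfolding column_res
    by (rule col_key[OF pen]) (use A in \<open>auto simp: approx_set_def\<close>)
  have nb: "(norm ((D' - D) *v column i A))\<^sup>2 \<le> C * ?t\<^sup>2 * (l1norm (column i A))\<^sup>2" for i
  proof -
    have "(norm ((D' - D) *v column i A))\<^sup>2 \<le> (norm_1to2 (D' - D) * l1norm (column i A))\<^sup>2"
      by (rule power_mono[OF norm_mv_bound]) simp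
    also have "\<dots> = (norm_1to2 (D' - D))\<^sup>2 * (l1norm (column i A))\<^sup>2" by (simp add: power_mult_distrib)
    also have "\<dots> \<le> C * ?t\<^sup>2 * (l1norm (column i A))\<^sup>2"
      by (rule mult_right_mono) (use Cb in auto)
    finally show ?thesis .
  qed
  have "(\<Sum>i\<in>UNIV. real_of_ereal (f_loss g (column i X) D')) \<le>
     (\<Sum>i\<in>UNIV. real_of_ereal (f_loss g (column i X) D) + e
     - column i (X - D ** A) \<bullet> ((D' - D) *v column i A) + 1/2 * (C * ?t\<^sup>2 * (l1norm (column i A))\<^sup>2))"
  proof (rule sum_mono)
    fix i show "real_of_ereal (f_loss g (column i X) D') \<le> real_of_ereal (f_loss g (column i X) D) + e
     - column i (X - D ** A) \<bullet> ((D' - D) *v column i A) + 1/2 * (C * ?t\<^sup>2 * (l1norm (column i A))\<^sup>2)"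
      using key[of i] nb[of i] by linarith
  qed
  also have "\<dots> = (\<Sum>i\<in>UNIV. real_of_ereal (f_loss g (column i X) D)) + ?n * e
     - frob_inner ?U (D' - D) + 1/2 * C * ?t\<^sup>2 * (\<Sum>i\<in>UNIV. (l1norm (column i A))\<^sup>2)"
    unfolding sumalg[OF finite_class.finite_UNIV] frob_sum by simp
  finally have S: "(\<Sum>i\<in>UNIV. real_of_ereal (f_loss g (column i X) D')) \<le> \<dots>" .
  have "Fr g X D' \<le> 1 / ?n * ((\<Sum>i\<in>UNIV. real_of_ereal (f_loss g (column i X) D)) + ?n * e
     - frob_inner ?U (D' - D) + 1/2 * C * ?t\<^sup>2 * (\<Sum>i\<in>UNIV. (l1norm (column i A))\<^sup>2))"
    unfolding Fr_def by (rule mult_left_mono[OF S]) simp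
  also have "\<dots> = Fr g X D + e
     + 1 / ?n * (- frob_inner ?U (D' - D))
     + ?t\<^sup>2 * (C / (2 * ?n) * (\<Sum>i\<in>UNIV. (l1norm (column i A))\<^sup>2))"
    unfolding Fr_def by (rule alg[OF n])
  finally show ?thesis .
qed


theorem mainTheorem3:
  fixes N :: "real^'d^'m \<Rightarrow> real"
    and g :: "real^'d \<Rightarrow> ereal"
    and C :: real
    and X :: "real^'n^'m"
    and D :: "real^'d^'m"
  assumes "is_matrix_norm N"
    and "is_penalty g"
    and "C > 0"
    and "\<forall>\<Delta>::real^'d^'m. (norm_1to2 \<Delta>)\<^sup>2 \<le> C * (N \<Delta>)\<^sup>2"
  shows "(\<forall>\<epsilon>>0. approx_set g \<epsilon> X D \<noteq> {}) \<and>
         (\<forall>D'::real^'d^'m. F_loss g X D' \<le> F_loss g X D + L_const N g X D * ereal (N (D' - D))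
              + C_const C g X D * ereal ((N (D' - D))\<^sup>2))"
proof -
  note Nn = assms(1) and pen = assms(2) and Cp = assms(3) and Cb = assms(4)
  let ?n = "real CARD('n)"
  have n: "?n > 0" by simp
  have ne: "(approx_set g e X D :: (real^'n^'d) set) \<noteq> {}" if "e > 0" for e
    by (rule approx_nonempty[OF pen that])
  let ?SL = "\<lambda>e. SUP A\<in>(approx_set g e X D :: (real^'n^'d) set).
      ereal (1 / ?n) * dual_norm N ((X - D ** A) ** transpose A)"
  let ?SC = "\<lambda>e. SUP A\<in>(approx_set g e X D :: (real^'n^'d) set).
      ereal (C / (2 * ?n) * (\<Sum>i\<in>UNIV. (l1norm (column i A))\<^sup>2))"
  have Ldef: "L_const N g X D = (INF e\<in>{0<..}. ?SL e)" unfolding L_const_def ..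
  have Cdef: "C_const C g X D = (INF e\<in>{0<..}. ?SC e)" unfolding C_const_def ..
  have Lnn: "L_const N g X D \<ge> 0"
    unfolding Ldef
  proof (rule INF_greatest)
    fix e :: real assume "e \<in> {0<..}"
    then obtain A where A: "A \<in> (approx_set g e X D :: (real^'n^'d) set)" using ne by fastforce
    have "0 \<le> ereal (1 / ?n) * dual_norm N ((X - D ** A) ** transpose A)"
      using dual_nonneg[OF Nn] by (simp add: mult_nonneg_nonneg)
    also have "\<dots> \<le> ?SL e" by (rule SUP_upper[OF A])
    finally show "0 \<le> ?SL e" .
  qed
  have Cnn: "C_const C g X D \<ge> 0"
    unfolding Cdef
  proof (rule INF_greatest)
    fix e :: real assume "e \<in> {0<..}"
    then obtain A where A: "A \<in> (approx_set g e X D :: (real^'n^'d) set)" using ne by fastforce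
    have "0 \<le> ereal (C / (2 * ?n) * (\<Sum>i\<in>UNIV. (l1norm (column i A))\<^sup>2))"
      using Cp by (simp add: sum_nonneg)
    also have "\<dots> \<le> ?SC e" by (rule SUP_upper[OF A])
    finally show "0 \<le> ?SC e" .
  qed
  have part2: "F_loss g X D' \<le> F_loss g X D + L_const N g X D * ereal (N (D' - D))
              + C_const C g X D * ereal ((N (D' - D))\<^sup>2)" for D'
  proof -
    let ?t = "N (D' - D)"
    have N0: "N 0 = 0" and Nh: "\<And>c M. N (c *\<^sub>R M) = \<bar>c\<bar> * N M"
      and Nt: "\<And>M M'. N (M + M') \<le> N M + N M'" and Nz: "\<And>M. N M = 0 \<longleftrightarrow> M = 0"
      using Nn unfolding is_matrix_norm_def by auto
    have "N ((D' - D) + (-1) *\<^sub>R (D' - D)) \<le> ?t + N ((-1) *\<^sub>R (D' - D))" by (rule Nt)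
    then have t0: "?t \<ge> 0" using N0 Nh[of "-1" "D' - D"] by simp
    show ?thesis
    proof (cases "?t = 0")
      case True
      then have "D' = D" using Nz by simp
      then show ?thesis using N0 by (simp add: zero_ereal_def[symmetric])
    next
      case False
      then have tp: "?t > 0" using t0 by simp
      show ?thesis
      proof (cases "L_const N g X D = \<infinity> \<or> C_const C g X D = \<infinity>")
        case True
        have a: "L_const N g X D * ereal ?t \<ge> 0" using Lnn t0 by simp
        have b: "C_const C g X D * ereal (?t\<^sup>2) \<ge> 0" using Cnn by simp
        have "L_const N g X D * ereal ?t = \<infinity> \<or> C_const C g X D * ereal (?t\<^sup>2) = \<infinity>"
          using True tp by auto
        then have "F_loss g X D + L_const N g X D * ereal ?t + C_const C g X D * ereal (?t\<^sup>2) = \<infinity>"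
          using a b F_Fr[OF pen, of X D] by auto
        then show ?thesis by (metis ereal_less_eq(1))
      next
        case False
        then obtain l c where l: "L_const N g X D = ereal l" and c: "C_const C g X D = ereal c"
          using Lnn Cnn by (cases "L_const N g X D"; cases "C_const C g X D") auto
        have real: "Fr g X D' \<le> Fr g X D + l * ?t + c * ?t\<^sup>2"
        proof (rule field_le_epsilon)
          fix e :: real assume e: "e > 0"
          define \<eta> where "\<eta> = e / (1 + ?t + ?t\<^sup>2)"
          have den: "1 + ?t + ?t\<^sup>2 > 0" using t0 by (simp add: add_pos_nonneg)
          have \<eta>: "\<eta> > 0" unfolding \<eta>_def using e den by simp
          have "(INF e\<in>{0<..}. ?SL e) < ereal (l + \<eta>)" unfolding Ldef[symmetric] l using \<eta> by simp
          then obtain e1 where e1: "e1 > 0" "?SL e1 < ereal (l + \<eta>)"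
            by (auto simp: INF_less_iff)
          have "(INF e\<in>{0<..}. ?SC e) < ereal (c + \<eta>)" unfolding Cdef[symmetric] c using \<eta> by simp
          then obtain e2 where e2: "e2 > 0" "?SC e2 < ereal (c + \<eta>)"
            by (auto simp: INF_less_iff)
          define \<epsilon> where "\<epsilon> = min (min e1 e2) \<eta>"
          have \<epsilon>: "\<epsilon> > 0" "\<epsilon> \<le> e1" "\<epsilon> \<le> e2" "\<epsilon> \<le> \<eta>" unfolding \<epsilon>_def using e1 e2 \<eta> by auto
          obtain A where A: "A \<in> (approx_set g \<epsilon> X D :: (real^'n^'d) set)" using ne[OF \<epsilon>(1)] by blast
          have A1: "A \<in> approx_set g e1 X D" using approx_mono[OF \<epsilon>(2)] A by blast
          have A2: "A \<in> approx_set g e2 X D" using approx_mono[OF \<epsilon>(3)] A by blast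
          let ?U = "(X - D ** A) ** transpose A"
          let ?Q = "\<Sum>i\<in>UNIV. (l1norm (column i A))\<^sup>2"
          have "ereal (1 / ?n * (- frob_inner ?U (D' - D) / ?t)) = ereal (1 / ?n) * ereal (- frob_inner ?U (D' - D) / ?t)"
            by simp
          also have "\<dots> \<le> ereal (1 / ?n) * dual_norm N ?U"
            by (rule ereal_mult_left_mono[OF dual_lb[OF Nn tp]]) simp
          also have "\<dots> \<le> ?SL e1" by (rule SUP_upper[OF A1])
          also have "\<dots> < ereal (l + \<eta>)" by (rule e1(2))
          finally have hL: "1 / ?n * (- frob_inner ?U (D' - D) / ?t) < l + \<eta>" by simp
          have "ereal (C / (2 * ?n) * ?Q) \<le> ?SC e2" by (rule SUP_upper[OF A2])
          also have "\<dots> < ereal (c + \<eta>)" by (rule e2(2))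
          finally have hC: "C / (2 * ?n) * ?Q < c + \<eta>" by simp
          have M: "Fr g X D' \<le> Fr g X D + \<epsilon> + 1 / ?n * (- frob_inner ?U (D' - D)) + ?t\<^sup>2 * (C / (2 * ?n) * ?Q)"
            by (rule main_A[OF pen Cb A])
          have "1 / ?n * (- frob_inner ?U (D' - D)) = ?t * (1 / ?n * (- frob_inner ?U (D' - D) / ?t))"
            using tp by simp
          also have "\<dots> \<le> ?t * (l + \<eta>)" using hL t0 by (intro mult_left_mono) auto
          finally have m1: "1 / ?n * (- frob_inner ?U (D' - D)) \<le> ?t * (l + \<eta>)" .
          have m2: "?t\<^sup>2 * (C / (2 * ?n) * ?Q) \<le> ?t\<^sup>2 * (c + \<eta>)" using hC by (intro mult_left_mono) auto
          have "\<eta> * (1 + ?t + ?t\<^sup>2) = e" unfolding \<eta>_def using den by simp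
          then show "Fr g X D' \<le> Fr g X D + l * ?t + c * ?t\<^sup>2 + e"
            using M m1 m2 \<epsilon>(4) by (simp add: algebra_simps)
        qed
        show ?thesis unfolding l c F_Fr[OF pen] using real by simp
      qed
    qed
  qed
  show ?thesis using ne part2 by blast
qed

end
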